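(* Let $L$ be a (right) Leibniz algebra and $B$ an ideal of $L$. For every integer $n\geq 1$, $B^n\subseteq {}^{n}B+\mathrm{Es}(B)$.
   Context: $F$ is a field of characteristic different from $2$ and all algebras are finite-dimensional over $F$. A (right) Leibniz algebra is an $F$-vector space $L$ with a bilinear product $(x,y)\mapsto xy$ satisfying $x(yz)=(xy)z-(xz)y$ for all $x,y,z\in L$. For subspaces $U,V\subseteq L$, $UV$ denotes the linear span of all $uv$ with $u\in U$, $v\in V$. An ideal of $L$ is a subspace $B$ with $LB\subseteq B$ and $BL\subseteq B$. Right powers: $B^1=B$, $B^{n+1}=B^nB$. Left powers: ${}^1B=B$, ${}^{n+1}B=B\,({}^{n}B)$. $\mathrm{Ess}(L)$ is the ideal generated by all squares $xx$ ($x\in L$) and $\mathrm{Es}(B)=B\cap\mathrm{Ess}(L)$. *)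

theory Defs
  imports Main "HOL.Vector_Spaces"
begin

definition bilinear_prod :: "('f::field \<Rightarrow> 'v::ab_group_add \<Rightarrow> 'v) \<Rightarrow> ('v \<Rightarrow> 'v \<Rightarrow> 'v) \<Rightarrow> bool" where
  "bilinear_prod scale mult \<longleftrightarrow>
     (\<forall>x y z. mult (x + y) z = mult x z + mult y z) \<and>
     (\<forall>x y z. mult x (y + z) = mult x y + mult x z) \<and>
     (\<forall>c x y. mult (scale c x) y = scale c (mult x y)) \<and>
     (\<forall>c x y. mult x (scale c y) = scale c (mult x y))"

definition right_leibniz :: "('f::field \<Rightarrow> 'v::ab_group_add \<Rightarrow> 'v) \<Rightarrow> ('v \<Rightarrow> 'v \<Rightarrow> 'v) \<Rightarrow> bool" where
  "right_leibniz scale mult \<longleftrightarrow>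
     vector_space scale \<and> bilinear_prod scale mult \<and>
     (\<forall>x y z. mult x (mult y z) = mult (mult x y) z - mult (mult x z) y)"

definition sprod :: "('f::field \<Rightarrow> 'v::ab_group_add \<Rightarrow> 'v) \<Rightarrow> ('v \<Rightarrow> 'v \<Rightarrow> 'v) \<Rightarrow> 'v set \<Rightarrow> 'v set \<Rightarrow> 'v set" where
  "sprod scale mult U V = module.span scale {mult u v | u v. u \<in> U \<and> v \<in> V}"

definition ssum :: "'v::ab_group_add set \<Rightarrow> 'v set \<Rightarrow> 'v set" where
  "ssum U V = {u + v | u v. u \<in> U \<and> v \<in> V}"

definition is_ideal :: "('f::field \<Rightarrow> 'v::ab_group_add \<Rightarrow> 'v) \<Rightarrow> ('v \<Rightarrow> 'v \<Rightarrow> 'v) \<Rightarrow> 'v set \<Rightarrow> bool" where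
  "is_ideal scale mult B \<longleftrightarrow> module.subspace scale B \<and>
     (\<forall>x b. b \<in> B \<longrightarrow> mult x b \<in> B) \<and> (\<forall>x b. b \<in> B \<longrightarrow> mult b x \<in> B)"

text \<open>Right powers: rpow B 1 = B, rpow B (n+1) = (rpow B n) B.
  (The value at 0 is irrelevant; we set it to B.)\<close>
fun rpow :: "('f::field \<Rightarrow> 'v::ab_group_add \<Rightarrow> 'v) \<Rightarrow> ('v \<Rightarrow> 'v \<Rightarrow> 'v) \<Rightarrow> 'v set \<Rightarrow> nat \<Rightarrow> 'v set" where
  "rpow scale mult B 0 = B"
| "rpow scale mult B (Suc 0) = B"
| "rpow scale mult B (Suc (Suc n)) = sprod scale mult (rpow scale mult B (Suc n)) B"

fun lpow :: "('f::field \<Rightarrow> 'v::ab_group_add \<Rightarrow> 'v) \<Rightarrow> ('v \<Rightarrow> 'v \<Rightarrow> 'v) \<Rightarrow> 'v set \<Rightarrow> nat \<Rightarrow> 'v set" where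
  "lpow scale mult B 0 = B"
| "lpow scale mult B (Suc 0) = B"
| "lpow scale mult B (Suc (Suc n)) = sprod scale mult B (lpow scale mult B (Suc n))"

definition Ess :: "('f::field \<Rightarrow> 'v::ab_group_add \<Rightarrow> 'v) \<Rightarrow> ('v \<Rightarrow> 'v \<Rightarrow> 'v) \<Rightarrow> 'v set" where
  "Ess scale mult = \<Inter>{I. is_ideal scale mult I \<and> {mult x x | x. True} \<subseteq> I}"

definition Es :: "('f::field \<Rightarrow> 'v::ab_group_add \<Rightarrow> 'v) \<Rightarrow> ('v \<Rightarrow> 'v \<Rightarrow> 'v) \<Rightarrow> 'v set \<Rightarrow> 'v set" where
  "Es scale mult B = B \<inter> Ess scale mult"

end

theory Submission
  imports Defs
begin

theorem lemma3p2:
  fixes scale :: "'f::field \<Rightarrow> 'v::ab_group_add \<Rightarrow> 'v"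
    and mult :: "'v \<Rightarrow> 'v \<Rightarrow> 'v"
    and B :: "'v set" and n :: nat
  assumes char: "(2::'f) \<noteq> 0"
    and fin: "\<exists>S. finite S \<and> module.span scale S = UNIV"
    and leib: "right_leibniz scale mult"
    and ideal: "is_ideal scale mult B"
    and n: "n \<ge> 1"
  shows "rpow scale mult B n \<subseteq> ssum (lpow scale mult B n) (Es scale mult B)"
proof -
  interpret V: vector_space scale using leib by (simp add: right_leibniz_def)
  have bil: "bilinear_prod scale mult" using leib by (simp add: right_leibniz_def)
  have addL: "\<And>x y z. mult (x + y) z = mult x z + mult y z" using bil by (simp add: bilinear_prod_def)
  have addR: "\<And>x y z. mult x (y + z) = mult x y + mult x z" using bil by (simp add: bilinear_prod_def)
  have subB: "V.subspace B" and iB: "\<And>x b. b \<in> B \<Longrightarrow> mult x b \<in> B" "\<And>x b. b \<in> B \<Longrightarrow> mult b x \<in> B"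
    using ideal by (auto simp: is_ideal_def)
  have EssI: "is_ideal scale mult (Ess scale mult)"
    unfolding is_ideal_def Ess_def V.subspace_def by auto
  have subE: "V.subspace (Ess scale mult)" and iE: "\<And>x b. b \<in> Ess scale mult \<Longrightarrow> mult b x \<in> Ess scale mult"
    using EssI by (auto simp: is_ideal_def)
  have sq: "\<And>x. mult x x \<in> Ess scale mult" unfolding Ess_def by auto
  have anti: "\<And>a b. mult a b + mult b a \<in> Ess scale mult"
  proof -
    fix a b
    have "mult (a+b) (a+b) = mult a a + mult a b + mult b a + mult b b"
      by (simp add: addL addR add.assoc)
    hence "mult a b + mult b a = mult (a+b) (a+b) - mult a a - mult b b"
      by (simp add: algebra_simps)
    thus "mult a b + mult b a \<in> Ess scale mult"
      using sq subE by (metis V.subspace_diff)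
  qed
  have subEs: "V.subspace (Es scale mult B)"
    unfolding Es_def using subB subE V.subspace_inter by blast
  have subsum: "\<And>U W. V.subspace U \<Longrightarrow> V.subspace W \<Longrightarrow> V.subspace (ssum U W)"
  proof -
    fix U W assume U: "V.subspace U" and W: "V.subspace W"
    show "V.subspace (ssum U W)"
      unfolding V.subspace_def ssum_def
    proof (intro conjI ballI allI)
      show "0 \<in> {u + v |u v. u \<in> U \<and> v \<in> W}" using U W V.subspace_0 by force
    next
      fix x y assume "x \<in> {u + v |u v. u \<in> U \<and> v \<in> W}" "y \<in> {u + v |u v. u \<in> U \<and> v \<in> W}"
      then obtain u1 v1 u2 v2 where "x = u1+v1" "y = u2 + v2" "u1 \<in> U" "u2 \<in> U" "v1 \<in> W" "v2 \<in> W" by blast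
      thus "x + y \<in> {u + v |u v. u \<in> U \<and> v \<in> W}"
        using U W V.subspace_add by (intro CollectI exI[of _ "u1+u2"] exI[of _ "v1+v2"]) (auto simp: algebra_simps)
    next
      fix c x assume "x \<in> {u + v |u v. u \<in> U \<and> v \<in> W}"
      then obtain u1 v1 where "x = u1+v1" "u1 \<in> U" "v1 \<in> W" by blast
      thus "scale c x \<in> {u + v |u v. u \<in> U \<and> v \<in> W}"
        using U W V.subspace_scale by (intro CollectI exI[of _ "scale c u1"] exI[of _ "scale c v1"]) (auto simp: V.scale_right_distrib)
    qed
  qed
  have sublp: "V.subspace (lpow scale mult B (Suc m))" for m
    by (cases m) (auto simp: subB sprod_def V.subspace_span)
  have "rpow scale mult B (Suc m) \<subseteq> ssum (lpow scale mult B (Suc m)) (Es scale mult B)" for m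
  proof (induction m)
    case 0
    show ?case unfolding ssum_def using subEs V.subspace_0 by force
  next
    case (Suc m)
    have S: "V.subspace (ssum (lpow scale mult B (Suc (Suc m))) (Es scale mult B))"
      using subsum sublp subEs by blast
    have gen: "mult x b \<in> ssum (lpow scale mult B (Suc (Suc m))) (Es scale mult B)"
      if x: "x \<in> rpow scale mult B (Suc m)" and b: "b \<in> B" for x b
    proof -
      from Suc x obtain a e where ae: "x = a + e" "a \<in> lpow scale mult B (Suc m)" "e \<in> Es scale mult B"
        unfolding ssum_def by blast
      have ba: "mult b a \<in> lpow scale mult B (Suc (Suc m))"
        using ae b by (auto simp: sprod_def intro: V.span_base)
      have nba: "- mult b a \<in> lpow scale mult B (Suc (Suc m))"
        using ba sublp V.subspace_neg by blast
      have e1: "mult a b + mult b a \<in> Es scale mult B"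
        unfolding Es_def using anti b iB subB V.subspace_add by blast
      have e2: "mult e b \<in> Es scale mult B"
        using ae(3) b iB iE unfolding Es_def by blast
      have e3: "(mult a b + mult b a) + mult e b \<in> Es scale mult B"
        using e1 e2 subEs V.subspace_add by blast
      have "mult x b = - mult b a + ((mult a b + mult b a) + mult e b)"
        using ae(1) by (simp add: addL algebra_simps)
      thus ?thesis unfolding ssum_def using nba e3 by blast
    qed
    show ?case
      unfolding rpow.simps sprod_def
      by (rule V.span_minimal[OF _ S]) (use gen in blast)
  qed
  moreover obtain m where "n = Suc m" using n by (cases n) auto
  ultimately show ?thesis by blast
qed

end
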